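(* Let $\mathsf{M}_1,\mathsf{M}_2$ be two unbiased dichotomic qubit measurements, i.e. $\mathsf{M}_1(\pm1)=\frac12(I\pm\vec a\cdot\vec\sigma)$ and $\mathsf{M}_2(\pm1)=\frac12(I\pm\vec b\cdot\vec\sigma)$ with $\vec a,\vec b\in\mathbb{R}^3$, $\|\vec a\|,\|\vec b\|\leq1$. Then $\mathsf{M}_1$ and $\mathsf{M}_2$ are incompatible if and only if they are useful for $(2,2)$-QRAC, i.e. if and only if $$\frac{1}{8}\sum_{x,y=\pm1}\big\|\mathsf{M}_1(x)+\mathsf{M}_2(y)\big\|>\frac34 .$$
   Context: $\vec\sigma=(\sigma_1,\sigma_2,\sigma_3)$ are the Pauli matrices, $I$ the identity on $\mathbb{C}^2$, and $\|\cdot\|$ the operator norm. Two POVMs are compatible if there is a POVM $\mathsf{G}(x,y)$ whose marginals $\sum_y\mathsf{G}(x,y)$ and $\sum_x\mathsf{G}(x,y)$ are $\mathsf{M}_1(x)$ and $\mathsf{M}_2(y)$; otherwise incompatible. The left-hand side of the displayed inequality is the optimal average success probability $\bar P_{\rm qrac}(\mathsf{M}_1,\mathsf{M}_2)$ in the $(2,2)$ quantum random access code, and $3/4$ is the optimal classical $(2,2)$ random access code success probability. *)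

theory Defs
  imports "HOL-Analysis.Analysis"
begin

definition mat2 :: "complex \<Rightarrow> complex \<Rightarrow> complex \<Rightarrow> complex \<Rightarrow> complex^2^2" where
  "mat2 p q r s = (\<chi> i j. if i = 1 then (if j = 1 then p else q) else (if j = 1 then r else s))"

definition sigma1 :: "complex^2^2" where "sigma1 = mat2 0 1 1 0"
definition sigma2 :: "complex^2^2" where "sigma2 = mat2 0 (-\<i>) \<i> 0"
definition sigma3 :: "complex^2^2" where "sigma3 = mat2 1 0 0 (-1)"

definition sigma_dot :: "real^3 \<Rightarrow> complex^2^2" where
  "sigma_dot a = (a$1) *\<^sub>R sigma1 + (a$2) *\<^sub>R sigma2 + (a$3) *\<^sub>R sigma3"

definition dich :: "real^3 \<Rightarrow> int \<Rightarrow> complex^2^2" where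
  "dich a x = (1/2::real) *\<^sub>R (mat 1 + (of_int x :: real) *\<^sub>R sigma_dot a)"

definition opnorm :: "complex^2^2 \<Rightarrow> real" where
  "opnorm A = onorm (\<lambda>v. A *v v)"

definition psd :: "complex^2^2 \<Rightarrow> bool" where
  "psd A \<longleftrightarrow> (\<forall>v::complex^2. let z = (\<Sum>i\<in>UNIV. cnj (v$i) * (A *v v)$i) in Im z = 0 \<and> Re z \<ge> 0)"

definition compatible :: "(int \<Rightarrow> complex^2^2) \<Rightarrow> (int \<Rightarrow> complex^2^2) \<Rightarrow> bool" where
  "compatible M1 M2 \<longleftrightarrow> (\<exists>G :: int \<Rightarrow> int \<Rightarrow> complex^2^2.
      (\<forall>x\<in>{-1,1}. \<forall>y\<in>{-1,1}. psd (G x y)) \<and>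
      (\<Sum>x\<in>{-1,1}. \<Sum>y\<in>{-1,1}. G x y) = mat 1 \<and>
      (\<forall>x\<in>{-1,1}. (\<Sum>y\<in>{-1,1}. G x y) = M1 x) \<and>
      (\<forall>y\<in>{-1,1}. (\<Sum>x\<in>{-1,1}. G x y) = M2 y))"

end

theory Submission
  imports Defs
begin

lemma mat2_nth: "mat2 p q r s $ 1 $ 1 = p" "mat2 p q r s $ 1 $ 2 = q"
  "mat2 p q r s $ 2 $ 1 = r" "mat2 p q r s $ 2 $ 2 = s"
  by (simp_all add: mat2_def)

lemma sd_nth:
  "sigma_dot u $ 1 $ 1 = complex_of_real (u$3)"
  "sigma_dot u $ 1 $ 2 = complex_of_real (u$1) - \<i> * complex_of_real (u$2)"
  "sigma_dot u $ 2 $ 1 = complex_of_real (u$1) + \<i> * complex_of_real (u$2)"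
  "sigma_dot u $ 2 $ 2 = - complex_of_real (u$3)"
  by (simp_all add: sigma_dot_def sigma1_def sigma2_def sigma3_def mat2_nth scaleR_conv_of_real[where 'a=complex])

lemma mat1_nth: "(mat 1 :: complex^2^2) $ 1 $ 1 = 1" "(mat 1 :: complex^2^2) $ 1 $ 2 = 0"
  "(mat 1 :: complex^2^2) $ 2 $ 1 = 0" "(mat 1 :: complex^2^2) $ 2 $ 2 = 1"
  by (simp_all add: mat_def)

lemma norm2_sq: "(norm (v::complex^2))^2 = (cmod (v$1))^2 + (cmod (v$2))^2"
  by (simp add: norm_vec_def L2_set_def sum_2)

lemma mv_nth: "(A *v (v::complex^2)) $ 1 = A$1$1 * v$1 + A$1$2 * v$2"
   "(A *v (v::complex^2)) $ 2 = A$2$1 * v$1 + A$2$2 * v$2"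
  by (simp_all add: matrix_vector_mult_def sum_2)

lemma norm3_sq: "(norm (u::real^3))^2 = (u$1)^2 + (u$2)^2 + (u$3)^2"
  by (simp add: norm_vec_def L2_set_def sum_3)

lemma H_norm_sq: "(norm (sigma_dot u *v v))^2 = (norm u)^2 * (norm v)^2"
proof -
  show ?thesis
    unfolding norm2_sq norm3_sq mv_nth sd_nth cmod_power2
    by (simp add: algebra_simps power2_eq_square)
qed

lemma H_norm: "norm (sigma_dot u *v v) = norm u * norm v"
proof -
  have "(norm (sigma_dot u *v v))^2 = (norm u * norm v)^2" using H_norm_sq by (simp add: power_mult_distrib)
  then show ?thesis by (simp add: power2_eq_iff_nonneg)
qed

lemma scaleR_mv: "((c::real) *\<^sub>R (A::complex^2^2)) *v v = c *\<^sub>R (A *v v)"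
  by (simp add: vec_eq_iff forall_2 mv_nth algebra_simps scaleR_conv_of_real[where 'a=complex])

lemma HH: "sigma_dot u *v (sigma_dot u *v w) = (norm u)^2 *\<^sub>R w"
proof -
  have "(norm u)^2 = (u$1)^2 + (u$2)^2 + (u$3)^2" by (rule norm3_sq)
  then show ?thesis
    by (simp add: vec_eq_iff forall_2 mv_nth sd_nth algebra_simps scaleR_conv_of_real[where 'a=complex] power2_eq_square)
qed

lemma A_bound: "norm ((mat 1 + (1/2::real) *\<^sub>R sigma_dot u) *v v) \<le> (1 + norm u / 2) * norm v"
proof -
  have "(mat 1 + (1/2::real) *\<^sub>R sigma_dot u) *v v = v + (1/2::real) *\<^sub>R (sigma_dot u *v v)"
    by (simp add: matrix_vector_mult_add_rdistrib scaleR_mv)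
  also have "norm \<dots> \<le> norm v + norm ((1/2::real) *\<^sub>R (sigma_dot u *v v))" by (rule norm_triangle_ineq)
  also have "\<dots> = (1 + norm u / 2) * norm v" by (simp add: H_norm algebra_simps)
  finally show ?thesis .
qed

lemma eigvec: "\<exists>v. v \<noteq> 0 \<and> sigma_dot u *v v = norm u *\<^sub>R v"
proof (cases "u = 0")
  case True
  then have "sigma_dot u *v axis 1 1 = norm u *\<^sub>R axis 1 1"
    by (simp add: vec_eq_iff forall_2 mv_nth sd_nth)
  then show ?thesis by (metis axis_nth zero_index one_neq_zero)
next
  case False
  define r where "r = norm u"
  have r: "r > 0" using False r_def by simp
  have key: "sigma_dot u *v (sigma_dot u *v w + r *\<^sub>R w) = r *\<^sub>R (sigma_dot u *v w + r *\<^sub>R w)" for w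
  proof -
    have sc: "sigma_dot u *v (r *\<^sub>R w) = r *\<^sub>R (sigma_dot u *v w)"
      by (simp add: vec_eq_iff forall_2 mv_nth algebra_simps scaleR_conv_of_real[where 'a=complex])
    have "sigma_dot u *v (sigma_dot u *v w + r *\<^sub>R w) = sigma_dot u *v (sigma_dot u *v w) + sigma_dot u *v (r *\<^sub>R w)"
      by (simp add: matrix_vector_right_distrib)
    also have "\<dots> = r^2 *\<^sub>R w + r *\<^sub>R (sigma_dot u *v w)" unfolding sc unfolding HH r_def ..
    also have "\<dots> = r *\<^sub>R (sigma_dot u *v w + r *\<^sub>R w)" by (simp add: algebra_simps power2_eq_square)
    finally show ?thesis .
  qed
  show ?thesis
  proof (cases "sigma_dot u *v axis 1 1 + r *\<^sub>R axis 1 1 = 0")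
    case False
    then show ?thesis using key r_def by blast
  next
    case True
    then have "(sigma_dot u *v axis 1 1 + r *\<^sub>R axis 1 1) $ 1 = 0" by simp
    then have u3: "u$3 = - r" by (simp add: mv_nth sd_nth axis_def scaleR_conv_of_real[where 'a=complex] complex_eq_iff)
    have "(sigma_dot u *v axis 2 1 + r *\<^sub>R axis 2 1) $ 2 \<noteq> 0"
      using r by (simp add: mv_nth sd_nth axis_def u3 scaleR_conv_of_real[where 'a=complex] complex_eq_iff)
    then have "sigma_dot u *v axis 2 1 + r *\<^sub>R axis 2 1 \<noteq> 0" by (metis zero_index)
    then show ?thesis using key r_def by blast
  qed
qed

lemma opnorm_val: "opnorm (mat 1 + (1/2::real) *\<^sub>R sigma_dot u) = 1 + norm u / 2"
proof (rule antisym)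
  show "opnorm (mat 1 + (1/2::real) *\<^sub>R sigma_dot u) \<le> 1 + norm u / 2"
    unfolding opnorm_def by (rule onorm_le) (rule A_bound)
next
  obtain v where v: "v \<noteq> 0" "sigma_dot u *v v = norm u *\<^sub>R v" using eigvec by blast
  have "(mat 1 + (1/2::real) *\<^sub>R sigma_dot u) *v v = (1 + norm u / 2) *\<^sub>R v"
    by (simp add: matrix_vector_mult_add_rdistrib scaleR_mv v(2) algebra_simps)
  then have "norm ((mat 1 + (1/2::real) *\<^sub>R sigma_dot u) *v v) = (1 + norm u / 2) * norm v"
    by simp
  moreover have "norm ((mat 1 + (1/2::real) *\<^sub>R sigma_dot u) *v v) \<le> opnorm (mat 1 + (1/2::real) *\<^sub>R sigma_dot u) * norm v"
    unfolding opnorm_def by (rule onorm) simp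
  ultimately show "1 + norm u / 2 \<le> opnorm (mat 1 + (1/2::real) *\<^sub>R sigma_dot u)"
    using v(1) by simp
qed



lemma mat_eq2: "(A::complex^2^2) = B \<longleftrightarrow> A$1$1 = B$1$1 \<and> A$1$2 = B$1$2 \<and> A$2$1 = B$2$1 \<and> A$2$2 = B$2$2"
  by (auto simp: vec_eq_iff forall_2)

lemma dich_nth:
  "dich a x $ 1 $ 1 = (1 + of_int x * complex_of_real (a$3)) / 2"
  "dich a x $ 1 $ 2 = of_int x * (complex_of_real (a$1) - \<i> * complex_of_real (a$2)) / 2"
  "dich a x $ 2 $ 1 = of_int x * (complex_of_real (a$1) + \<i> * complex_of_real (a$2)) / 2"
  "dich a x $ 2 $ 2 = (1 - of_int x * complex_of_real (a$3)) / 2"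
  by (simp_all add: dich_def sd_nth mat1_nth scaleR_conv_of_real[where 'a=complex] algebra_simps)

lemma inner3: "(a::real^3) \<bullet> s = a$1 * s$1 + a$2 * s$2 + a$3 * s$3"
  by (simp add: inner_vec_def sum_3)

lemma re_qf: "Re (\<Sum>i\<in>UNIV. cnj (v$i) * (A *v v)$i) = v \<bullet> (A *v v)"
  by (simp add: inner_vec_def inner_complex_def)

lemma psd_H:
  assumes "norm u \<le> c"
  shows "psd (c *\<^sub>R mat 1 + sigma_dot u)"
  unfolding psd_def Let_def
proof (intro allI conjI)
  fix v :: "complex^2"
  show "Im (\<Sum>i\<in>UNIV. cnj (v$i) * ((c *\<^sub>R mat 1 + sigma_dot u) *v v)$i) = 0"
    by (simp add: sum_2 mv_nth sd_nth mat1_nth scaleR_conv_of_real[where 'a=complex] algebra_simps)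
  have "v \<bullet> ((c *\<^sub>R mat 1 + sigma_dot u) *v v) = c * (norm v)^2 + v \<bullet> (sigma_dot u *v v)"
    by (simp add: matrix_vector_mult_add_rdistrib scaleR_mv inner_add_right power2_norm_eq_inner)
  moreover have "- (norm v * norm (sigma_dot u *v v)) \<le> v \<bullet> (sigma_dot u *v v)"
    using Cauchy_Schwarz_ineq2[of v "sigma_dot u *v v"] by linarith
  moreover have "norm v * norm (sigma_dot u *v v) = norm u * (norm v)^2"
    by (simp add: H_norm power2_eq_square)
  moreover have "norm u * (norm v)^2 \<le> c * (norm v)^2"
    using assms by (simp add: mult_right_mono)
  ultimately show "0 \<le> Re (\<Sum>i\<in>UNIV. cnj (v$i) * ((c *\<^sub>R mat 1 + sigma_dot u) *v v)$i)"
    unfolding re_qf by linarith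
qed

definition tr0 :: "complex^2^2 \<Rightarrow> real" where
  "tr0 G = Re (G$1$1 + G$2$2)"
definition lin :: "complex^2^2 \<Rightarrow> real^3 \<Rightarrow> real" where
  "lin G s = Re (G$1$1 * complex_of_real (s$3) - G$2$2 * complex_of_real (s$3)
     + G$1$2 * Complex (s$1) (s$2) + G$2$1 * Complex (s$1) (- s$2))"

lemma lin_add: "lin (A + B) s = lin A s + lin B s"
  by (simp add: lin_def algebra_simps)
lemma tr0_add: "tr0 (A + B) = tr0 A + tr0 B"
  by (simp add: tr0_def algebra_simps)
lemma lin_neg: "lin A (-s) = - lin A s"
  by (simp add: lin_def algebra_simps)
lemma lin_dich: "lin (dich a x) s = of_int x * (a \<bullet> s)"
  by (simp add: lin_def dich_nth inner3 field_simps)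
lemma tr0_mat1: "tr0 (mat 1) = 2"
  by (simp add: tr0_def mat1_nth)

lemma trs_psd:
  assumes "psd G" "norm s \<le> 1"
  shows "0 \<le> tr0 G + lin G s"
proof -
  have qf: "0 \<le> Re (\<Sum>i\<in>UNIV. cnj (v$i) * (G *v v)$i)" for v
    using assms(1) unfolding psd_def Let_def by blast
  have s: "(s$1)^2 + (s$2)^2 + (s$3)^2 \<le> 1"
    using assms(2) norm3_sq[of s] by (metis abs_norm_cancel norm_ge_zero power_le_one)
  have Rt: "0 \<le> Re (G$2$2)"
    using qf[of "axis 2 1"] by (simp add: sum_2 mv_nth axis_def)
  have Q: "0 \<le> (1 + s$3)^2 * Re (G$1$1) + ((s$1)^2 + (s$2)^2) * Re (G$2$2)
      + (1 + s$3) * Re (G$1$2 * Complex (s$1) (s$2) + G$2$1 * Complex (s$1) (- s$2))"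
    using qf[of "vector [complex_of_real (1 + s$3), Complex (s$1) (s$2)]"]
    by (simp add: sum_2 mv_nth algebra_simps power2_eq_square)
  show ?thesis
  proof (cases "s$3 = -1")
    case True
    have h: "(s$1)^2 + (s$2)^2 \<le> 0" using s True by simp
    then have "(s$1)^2 = 0" "(s$2)^2 = 0" by (smt (verit) zero_le_power2)+
    then have "s$1 = 0" "s$2 = 0" by simp_all
    then show ?thesis using True Rt by (simp add: tr0_def lin_def)
  next
    case False
    have "(s$3)^2 \<le> 1" using s by (smt (verit) zero_le_power2)
    then have "\<bar>s$3\<bar> \<le> 1" by (simp add: abs_square_le_1)
    then have p: "1 + s$3 > 0" using False by linarith
    have "(1 + s$3) * (tr0 G + lin G s) = ((1 + s$3)^2 * Re (G$1$1) + ((s$1)^2 + (s$2)^2) * Re (G$2$2)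
      + (1 + s$3) * Re (G$1$2 * Complex (s$1) (s$2) + G$2$1 * Complex (s$1) (- s$2)))
      + Re (G$2$2) * (1 - (s$1)^2 - (s$2)^2 - (s$3)^2)"
      by (simp add: tr0_def lin_def algebra_simps power2_eq_square)
    also have "\<dots> \<ge> 0" using Q Rt s by (simp add: mult_nonneg_nonneg)
    finally show ?thesis using p by (simp add: zero_le_mult_iff)
  qed
qed

lemma inner_sgn_self: "(x::real^3) \<bullet> sgn x = norm x"
  by (cases "x = 0") (simp_all add: sgn_div_norm inner_scaleR_right dot_square_norm power2_eq_square)

lemma norm_sgn_le: "norm (sgn (x::real^3)) \<le> 1"
  by (simp add: norm_sgn)

lemma nec:
  assumes "compatible (dich a) (dich b)"
  shows "norm (a + b) + norm (a - b) \<le> 2"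
proof -
  obtain G where psd: "\<forall>x\<in>{-1,1}. \<forall>y\<in>{-1,1}. psd (G x y)"
    and tot: "(\<Sum>x\<in>{-1,1}. \<Sum>y\<in>{-1,1}. G x y) = mat 1"
    and m1: "\<forall>x\<in>{-1,1}. (\<Sum>y\<in>{-1,1}. G x y) = dich a x"
    and m2: "\<forall>y\<in>{-1,1}. (\<Sum>x\<in>{-1,1}. G x y) = dich b y"
    using assms unfolding compatible_def by blast
  define u where "u = sgn (a + b)"
  define w where "w = sgn (a - b)"
  have e1: "G (-1) (-1) + G (-1) 1 = dich a (-1)" using m1 by simp
  have e2: "G 1 (-1) + G 1 1 = dich a 1" using m1 by simp
  have e3: "G (-1) 1 + G 1 1 = dich b 1" using m2 by simp
  have e0: "G (-1) (-1) + G (-1) 1 + (G 1 (-1) + G 1 1) = mat 1" using tot by simp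
  have f1: "lin (G (-1) (-1)) u + lin (G (-1) 1) u = - (a \<bullet> u)"
    using arg_cong[OF e1, of "\<lambda>M. lin M u"] by (simp add: lin_add lin_dich)
  have f2: "lin (G 1 (-1)) w + lin (G 1 1) w = a \<bullet> w"
    using arg_cong[OF e2, of "\<lambda>M. lin M w"] by (simp add: lin_add lin_dich)
  have f3: "lin (G (-1) 1) u + lin (G 1 1) u = b \<bullet> u"
    using arg_cong[OF e3, of "\<lambda>M. lin M u"] by (simp add: lin_add lin_dich)
  have f4: "lin (G (-1) 1) w + lin (G 1 1) w = b \<bullet> w"
    using arg_cong[OF e3, of "\<lambda>M. lin M w"] by (simp add: lin_add lin_dich)
  have f0: "tr0 (G (-1) (-1)) + tr0 (G (-1) 1) + (tr0 (G 1 (-1)) + tr0 (G 1 1)) = 2"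
    using arg_cong[OF e0, of tr0] by (simp add: tr0_add tr0_mat1)
  have nu: "norm u \<le> 1" "norm (-u) \<le> 1" "norm w \<le> 1" "norm (-w) \<le> 1"
    unfolding u_def w_def using norm_sgn_le by auto
  have t1: "0 \<le> tr0 (G 1 1) + lin (G 1 1) (-u)" using trs_psd psd nu by auto
  have t2: "0 \<le> tr0 (G (-1) (-1)) + lin (G (-1) (-1)) u" using trs_psd psd nu by auto
  have t3: "0 \<le> tr0 (G 1 (-1)) + lin (G 1 (-1)) (-w)" using trs_psd psd nu by auto
  have t4: "0 \<le> tr0 (G (-1) 1) + lin (G (-1) 1) w" using trs_psd psd nu by auto
  have i1: "a \<bullet> u + b \<bullet> u = norm (a + b)" unfolding u_def
    by (metis inner_add_left inner_sgn_self)
  have i2: "a \<bullet> w - b \<bullet> w = norm (a - b)" unfolding w_def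
    by (metis inner_diff_left inner_sgn_self)
  show ?thesis using t1 t2 t3 t4 f0 f1 f2 f3 f4 i1 i2 unfolding lin_neg by linarith
qed

lemma Gsum1: "(((1 + of_int x * of_int (-1::int) * g) / 4) *\<^sub>R (mat 1 :: complex^2^2)
     + sigma_dot ((1/4::real) *\<^sub>R (of_int x *\<^sub>R a + of_int (-1::int) *\<^sub>R b)))
   + (((1 + of_int x * of_int (1::int) * g) / 4) *\<^sub>R (mat 1 :: complex^2^2)
     + sigma_dot ((1/4::real) *\<^sub>R (of_int x *\<^sub>R a + of_int (1::int) *\<^sub>R b))) = dich a x"
  unfolding mat_eq2
  by (simp add: sd_nth mat1_nth dich_nth scaleR_conv_of_real[where 'a=complex] field_simps)

lemma Gsum2: "(((1 + of_int (-1::int) * of_int y * g) / 4) *\<^sub>R (mat 1 :: complex^2^2)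
     + sigma_dot ((1/4::real) *\<^sub>R (of_int (-1::int) *\<^sub>R a + of_int y *\<^sub>R b)))
   + (((1 + of_int (1::int) * of_int y * g) / 4) *\<^sub>R (mat 1 :: complex^2^2)
     + sigma_dot ((1/4::real) *\<^sub>R (of_int (1::int) *\<^sub>R a + of_int y *\<^sub>R b))) = dich b y"
  unfolding mat_eq2
  by (simp add: sd_nth mat1_nth dich_nth scaleR_conv_of_real[where 'a=complex] field_simps)

lemma dich_sum: "dich a (-1) + dich a 1 = mat 1"
  unfolding mat_eq2 by (simp add: mat1_nth dich_nth field_simps)

lemma suff:
  assumes "norm (a + b) + norm (a - b) \<le> 2"
  shows "compatible (dich a) (dich b)"
proof -
  define g where "g = (norm (a + b) - norm (a - b)) / 2"
  define G where "G = (\<lambda>x y::int. ((1 + of_int x * of_int y * g) / 4) *\<^sub>R (mat 1 :: complex^2^2)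
     + sigma_dot ((1/4::real) *\<^sub>R (of_int x *\<^sub>R a + of_int y *\<^sub>R b)))"
  have na1: "norm (-a - b) = norm (a + b)"
    using norm_minus_cancel[of "a+b"] by (simp add: algebra_simps)
  have na2: "norm (-a + b) = norm (a - b)"
    using norm_minus_commute[of b a] by (simp add: algebra_simps)
  note na = na1 na2
  have p: "psd (G x y)" if "x \<in> {-1,1}" "y \<in> {-1,1}" for x y
  proof -
    have k: "norm (of_int x *\<^sub>R a + of_int y *\<^sub>R b) \<le> 1 + of_int x * of_int y * g"
    proof -
      from that have "x = -1 \<or> x = 1" "y = -1 \<or> y = 1" by auto
      then show ?thesis
      proof (elim disjE)
        assume "x = -1" "y = -1"
        moreover have "norm (- a - b) \<le> 1 + g" using assms na1 by (simp add: g_def field_simps)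
        ultimately show ?thesis by (simp add: algebra_simps)
      next
        assume "x = -1" "y = 1"
        moreover have "norm (- a + b) \<le> 1 - g" using assms na2 by (simp add: g_def field_simps)
        ultimately show ?thesis by (simp add: algebra_simps)
      next
        assume "x = 1" "y = -1"
        moreover have "norm (a - b) \<le> 1 - g" using assms  by (simp add: g_def field_simps)
        ultimately show ?thesis by (simp add: algebra_simps)
      next
        assume "x = 1" "y = 1"
        moreover have "norm (a + b) \<le> 1 + g" using assms  by (simp add: g_def field_simps)
        ultimately show ?thesis by (simp add: algebra_simps)
      qed
    qed
    have "norm ((1/4::real) *\<^sub>R (of_int x *\<^sub>R a + of_int y *\<^sub>R b)) = norm (of_int x *\<^sub>R a + of_int y *\<^sub>R b) / 4"
      by simp
    then have "norm ((1/4::real) *\<^sub>R (of_int x *\<^sub>R a + of_int y *\<^sub>R b)) \<le> (1 + of_int x * of_int y * g) / 4"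
      using k by (simp add: divide_right_mono)
    then show ?thesis unfolding G_def by (rule psd_H)
  qed
  have c1: "(\<Sum>y\<in>{-1,1}. G x y) = dich a x" for x
  proof -
    have "(\<Sum>y\<in>{-1,1}. G x y) = G x (-1) + G x 1" by simp
    also have "\<dots> = dich a x" unfolding G_def by (rule Gsum1)
    finally show ?thesis .
  qed
  have c2: "(\<Sum>x\<in>{-1,1}. G x y) = dich b y" for y
  proof -
    have "(\<Sum>x\<in>{-1,1}. G x y) = G (-1) y + G 1 y" by simp
    also have "\<dots> = dich b y" unfolding G_def by (rule Gsum2)
    finally show ?thesis .
  qed
  have c0: "(\<Sum>x\<in>{-1,1}. \<Sum>y\<in>{-1,1}. G x y) = mat 1"
    unfolding c1 using dich_sum by simp
  show ?thesis unfolding compatible_def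
    using p c0 c1 c2 by blast
qed

lemma dich_add: "dich a x + dich b y = mat 1 + (1/2::real) *\<^sub>R sigma_dot (of_int x *\<^sub>R a + of_int y *\<^sub>R b)"
  unfolding mat_eq2
  by (simp add: sd_nth mat1_nth dich_nth scaleR_conv_of_real[where 'a=complex] field_simps)

lemma opn: "opnorm (dich a x + dich b y) = 1 + norm (of_int x *\<^sub>R a + of_int y *\<^sub>R b) / 2"
  unfolding dich_add by (rule opnorm_val)

theorem proposition2:
  fixes a b :: "real^3"
  assumes "norm a \<le> 1" and "norm b \<le> 1"
  shows "\<not> compatible (dich a) (dich b) \<longleftrightarrow>
    (1/8) * (\<Sum>x\<in>{-1::int,1}. \<Sum>y\<in>{-1::int,1}. opnorm (dich a x + dich b y)) > 3/4"
proof -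
  have na1: "norm (-a - b) = norm (a + b)"
    using norm_minus_cancel[of "a+b"] by (simp add: algebra_simps)
  have na2: "norm (-a + b) = norm (a - b)"
    using norm_minus_commute[of b a] by (simp add: algebra_simps)
  have S: "(\<Sum>x\<in>{-1::int,1}. \<Sum>y\<in>{-1::int,1}. opnorm (dich a x + dich b y))
      = 4 + norm (a + b) + norm (a - b)"
    unfolding opn using na1 na2 by simp
  have "compatible (dich a) (dich b) \<longleftrightarrow> norm (a + b) + norm (a - b) \<le> 2"
    using nec suff by blast
  then show ?thesis unfolding S by auto
qed

end
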